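(* Let $d\in\mathbb N$, $\mathcal D=\{1,\dots,d\}$, $f\in \mathrm L_2(\mathbb T^d)$ and $d_s\in\mathcal D$. Then $$\mathrm T_{d_s}f=\sum_{\substack{\mathbf u\subseteq\mathcal D\\|\mathbf u|\le d_s}}\left[\sum_{n=|\mathbf u|}^{d_s}(-1)^{n-|\mathbf u|}\binom{d-|\mathbf u|}{n-|\mathbf u|}\right]\mathrm P_{\mathbf u}f.$$
   Context: $\mathbb T=[0,1)$ with periodic identification. For $\mathbf u\subseteq\mathcal D$, $\mathbf u^c=\mathcal D\setminus\mathbf u$, $\mathbf x_{\mathbf u}=(x_i)_{i\in\mathbf u}$. Projection: $\mathrm P_{\mathbf u}f(\mathbf x_{\mathbf u})=\int_{\mathbb T^{|\mathbf u^c|}}f(\mathbf x)\,d\mathbf x_{\mathbf u^c}$, viewed as a function on $\mathbb T^d$. ANOVA terms: $f_{\mathbf u}=\mathrm P_{\mathbf u}f-\sum_{\mathbf v\subsetneq\mathbf u}f_{\mathbf v}$ (recursively). $\mathrm T_{d_s}f=\sum_{\mathbf u\subseteq\mathcal D,\,|\mathbf u|\le d_s}f_{\mathbf u}$. *)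

theory Defs
  imports "HOL-Analysis.Analysis"
begin

definition torus1 :: "real measure" where
  "torus1 = restrict_space lborel {0..<1}"

definition torus :: "nat \<Rightarrow> (nat \<Rightarrow> real) measure" where
  "torus d = PiM {1..d} (\<lambda>_. torus1)"

definition proj :: "nat \<Rightarrow> nat set \<Rightarrow> ((nat \<Rightarrow> real) \<Rightarrow> complex) \<Rightarrow> (nat \<Rightarrow> real) \<Rightarrow> complex" where
  "proj d u f x = (\<integral>y. f (merge u ({1..d} - u) (x, y)) \<partial>(PiM ({1..d} - u) (\<lambda>_. torus1)))"

function anova :: "nat \<Rightarrow> ((nat \<Rightarrow> real) \<Rightarrow> complex) \<Rightarrow> nat set \<Rightarrow> (nat \<Rightarrow> real) \<Rightarrow> complex" where
  "anova d f u = (if u \<subseteq> {1..d}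
     then (\<lambda>x. proj d u f x - (\<Sum>v\<in>{v. v \<subset> u}. anova d f v x))
     else (\<lambda>x. 0))"
  by auto
termination
  apply (relation "Wellfounded.measure (\<lambda>(d, f, u). card u)")
   apply simp
  apply (auto intro!: psubset_card_mono dest: finite_subset)
  done

definition trunc_anova :: "nat \<Rightarrow> nat \<Rightarrow> ((nat \<Rightarrow> real) \<Rightarrow> complex) \<Rightarrow> (nat \<Rightarrow> real) \<Rightarrow> complex" where
  "trunc_anova d ds f x = (\<Sum>u\<in>{u. u \<subseteq> {1..d} \<and> card u \<le> ds}. anova d f u x)"

end

theory Submission
  imports Defs
begin

lemma count_between:
  assumes "finite u" "w \<subseteq> u" "card w \<le> n"
  shows "card {v. w \<subseteq> v \<and> v \<subseteq> u \<and> card v = n} = (card u - card w) choose (n - card w)"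
proof -
  have fw: "finite w" using assms finite_subset by blast
  have "bij_betw (\<lambda>v. v - w) {v. w \<subseteq> v \<and> v \<subseteq> u \<and> card v = n} {B. B \<subseteq> u - w \<and> card B = n - card w}"
  proof (rule bij_betw_byWitness[where f'="\<lambda>B. B \<union> w"])
    show "\<forall>a\<in>{v. w \<subseteq> v \<and> v \<subseteq> u \<and> card v = n}. a - w \<union> w = a" by auto
    show "\<forall>a\<in>{B. B \<subseteq> u - w \<and> card B = n - card w}. a \<union> w - w = a" by auto
    show "(\<lambda>v. v - w) ` {v. w \<subseteq> v \<and> v \<subseteq> u \<and> card v = n} \<subseteq> {B. B \<subseteq> u - w \<and> card B = n - card w}"
      using fw by (auto simp: card_Diff_subset)
    show "(\<lambda>B. B \<union> w) ` {B. B \<subseteq> u - w \<and> card B = n - card w} \<subseteq> {v. w \<subseteq> v \<and> v \<subseteq> u \<and> card v = n}"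
    proof clarify
      fix B assume B: "B \<subseteq> u - w" "card B = n - card w"
      have "finite B" using B assms finite_subset by blast
      then have "card (B \<union> w) = card B + card w" using fw B by (subst card_Un_disjoint) auto
      then show "w \<subseteq> B \<union> w \<and> B \<union> w \<subseteq> u \<and> card (B \<union> w) = n" using B assms by auto
    qed
  qed
  then have "card {v. w \<subseteq> v \<and> v \<subseteq> u \<and> card v = n} = card {B. B \<subseteq> u - w \<and> card B = n - card w}"
    by (rule bij_betw_same_card)
  also have "\<dots> = card (u - w) choose (n - card w)" using assms by (simp add: n_subsets)
  also have "card (u - w) = card u - card w" using assms fw by (simp add: card_Diff_subset)
  finally show ?thesis .
qed

lemma alt_between:
  assumes "finite u" "w \<subseteq> u" "w \<noteq> u"
  shows "(\<Sum>v\<in>{v. w \<subseteq> v \<and> v \<subseteq> u}. (-1::complex) ^ (card v - card w)) = 0"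
proof -
  let ?S = "{v. w \<subseteq> v \<and> v \<subseteq> u}"
  have fS: "finite ?S" using assms by (auto intro: finite_subset[of _ "Pow u"])
  have "(\<Sum>v\<in>?S. (-1::complex) ^ (card v - card w)) =
     (\<Sum>n\<in>{card w..card u}. \<Sum>v\<in>{v. v \<in> ?S \<and> card v = n}. (-1::complex) ^ (card v - card w))"
  proof -
    have "card ` ?S \<subseteq> {card w..card u}"
    proof
      fix c assume "c \<in> card ` ?S"
      then obtain v where v: "w \<subseteq> v" "v \<subseteq> u" "c = card v" by auto
      have "finite v" using v assms finite_subset by blast
      then show "c \<in> {card w..card u}" using v assms by (simp add: card_mono)
    qed
    then show ?thesis using fS
      by (subst sum.group[symmetric, where g=card and T="{card w..card u}"]) auto
  qed
  also have "\<dots> = (\<Sum>n\<in>{card w..card u}. (-1::complex) ^ (n - card w) * of_nat ((card u - card w) choose (n - card w)))"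
  proof (rule sum.cong[OF refl])
    fix n assume n: "n \<in> {card w..card u}"
    have "{v. v \<in> ?S \<and> card v = n} = {v. w \<subseteq> v \<and> v \<subseteq> u \<and> card v = n}" by auto
    then show "(\<Sum>v\<in>{v. v \<in> ?S \<and> card v = n}. (-1::complex) ^ (card v - card w)) = (-1::complex) ^ (n - card w) * of_nat ((card u - card w) choose (n - card w))"
      using count_between[OF assms(1,2), of n] n by simp
  qed
  also have "\<dots> = (\<Sum>i\<le>card u - card w. (-1::complex) ^ i * of_nat ((card u - card w) choose i))"
  proof -
    have "card w \<le> card u" using assms by (simp add: card_mono)
    then show ?thesis
      by (intro sum.reindex_bij_witness[where i="\<lambda>i. i + card w" and j="\<lambda>n. n - card w"]) auto
  qed
  also have "\<dots> = 0"
  proof (rule choose_alternating_sum)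
    have "card w < card u" using assms by (meson psubsetI psubset_card_mono)
    then show "0 < card u - card w" by simp
  qed
  finally show ?thesis .
qed

definition gmob :: "nat \<Rightarrow> ((nat \<Rightarrow> real) \<Rightarrow> complex) \<Rightarrow> nat set \<Rightarrow> (nat \<Rightarrow> real) \<Rightarrow> complex" where
  "gmob d f u x = (\<Sum>v\<in>Pow u. (-1::complex) ^ (card u - card v) * proj d v f x)"

lemma gmob_sum:
  assumes "finite u"
  shows "(\<Sum>v\<in>Pow u. gmob d f v x) = proj d u f x"
proof -
  have "(\<Sum>v\<in>Pow u. gmob d f v x) = (\<Sum>v\<in>Pow u. \<Sum>w\<in>{w. w \<in> Pow u \<and> w \<subseteq> v}. (-1::complex) ^ (card v - card w) * proj d w f x)"
    unfolding gmob_def by (intro sum.cong refl) auto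
  also have "\<dots> = (\<Sum>w\<in>Pow u. \<Sum>v\<in>{v. v \<in> Pow u \<and> w \<subseteq> v}. (-1::complex) ^ (card v - card w) * proj d w f x)"
    using assms by (intro sum.swap_restrict) auto
  also have "\<dots> = (\<Sum>w\<in>Pow u. (if w = u then proj d u f x else 0))"
  proof (rule sum.cong[OF refl])
    fix w assume w: "w \<in> Pow u"
    have "(\<Sum>v\<in>{v. v \<in> Pow u \<and> w \<subseteq> v}. (-1::complex) ^ (card v - card w) * proj d w f x)
       = (\<Sum>v\<in>{v. w \<subseteq> v \<and> v \<subseteq> u}. (-1::complex) ^ (card v - card w)) * proj d w f x"
      by (simp add: sum_distrib_right) (intro sum.cong refl; auto)
    also have "\<dots> = (if w = u then proj d u f x else 0)"
    proof (cases "w = u")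
      case True
      then have "{v. w \<subseteq> v \<and> v \<subseteq> u} = {u}" by auto
      then show ?thesis using True by simp
    next
      case False
      then show ?thesis using alt_between[OF assms, of w] w by simp
    qed
    finally show "(\<Sum>v\<in>{v. v \<in> Pow u \<and> w \<subseteq> v}. (-1::complex) ^ (card v - card w) * proj d w f x) = (if w = u then proj d u f x else 0)" .
  qed
  also have "\<dots> = proj d u f x" using assms by (simp add: sum.delta')
  finally show ?thesis .
qed

lemma anova_mob:
  "u \<subseteq> {1..d} \<Longrightarrow> anova d f u x = gmob d f u x"
proof (induction "card u" arbitrary: u rule: less_induct)
  case less
  have fu: "finite u" using less.prems finite_subset by blast
  have "anova d f u x = proj d u f x - (\<Sum>v\<in>{v. v \<subset> u}. anova d f v x)"
    using less.prems by (subst anova.simps) simp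
  also have "(\<Sum>v\<in>{v. v \<subset> u}. anova d f v x) = (\<Sum>v\<in>{v. v \<subset> u}. gmob d f v x)"
  proof (rule sum.cong[OF refl])
    fix v assume "v \<in> {v. v \<subset> u}"
    then have "v \<subset> u" by simp
    then show "anova d f v x = gmob d f v x"
      using less.hyps[of v] less.prems fu by (meson order.trans psubset_card_mono psubset_imp_subset)
  qed
  also have "{v. v \<subset> u} = Pow u - {u}" by auto
  also have "(\<Sum>v\<in>Pow u - {u}. gmob d f v x) = (\<Sum>v\<in>Pow u. gmob d f v x) - gmob d f u x"
    using fu by (simp add: sum_diff1)
  also have "\<dots> = proj d u f x - gmob d f u x" using gmob_sum[OF fu] by simp
  finally show ?case by simp
qed


lemma coeff:
  assumes "v \<subseteq> {1..d}" "card v \<le> ds"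
  shows "(\<Sum>u\<in>{u. u \<in> {u. u \<subseteq> {1..d} \<and> card u \<le> ds} \<and> v \<subseteq> u}. (-1::complex) ^ (card u - card v))
    = (\<Sum>n = card v..ds. (-1::complex) ^ (n - card v) * of_nat ((d - card v) choose (n - card v)))"
proof -
  let ?S = "{u. u \<in> {u. u \<subseteq> {1..d} \<and> card u \<le> ds} \<and> v \<subseteq> u}"
  have fS: "finite ?S" by (rule finite_subset[of _ "Pow {1..d}"]) auto
  have fv: "finite v" using assms finite_subset by blast
  have "card ` ?S \<subseteq> {card v..ds}"
    using fv by (auto intro!: card_mono) (meson finite_atLeastAtMost finite_subset)
  then have "(\<Sum>u\<in>?S. (-1::complex) ^ (card u - card v)) =
     (\<Sum>n\<in>{card v..ds}. \<Sum>u\<in>{u. u \<in> ?S \<and> card u = n}. (-1::complex) ^ (card u - card v))"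
    using fS by (subst sum.group[symmetric, where g=card and T="{card v..ds}"]) auto
  also have "\<dots> = (\<Sum>n = card v..ds. (-1::complex) ^ (n - card v) * of_nat ((d - card v) choose (n - card v)))"
  proof (rule sum.cong[OF refl])
    fix n assume n: "n \<in> {card v..ds}"
    have "{u. u \<in> ?S \<and> card u = n} = {u. v \<subseteq> u \<and> u \<subseteq> {1..d} \<and> card u = n}" using n by auto
    then show "(\<Sum>u\<in>{u. u \<in> ?S \<and> card u = n}. (-1::complex) ^ (card u - card v)) = (-1::complex) ^ (n - card v) * of_nat ((d - card v) choose (n - card v))"
      using count_between[of "{1..d}" v n] n assms by simp
  qed
  finally show ?thesis .
qed

theorem corollary4p5:
  fixes d ds :: nat and f :: "(nat \<Rightarrow> real) \<Rightarrow> complex"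
  assumes "ds \<in> {1..d}"
    and "f \<in> borel_measurable (torus d)"
    and "integrable (torus d) (\<lambda>x. (cmod (f x))\<^sup>2)"
  shows "\<forall>x \<in> space (torus d).
    trunc_anova d ds f x =
      (\<Sum>u\<in>{u. u \<subseteq> {1..d} \<and> card u \<le> ds}.
         (\<Sum>n = card u..ds. (-1::complex) ^ (n - card u) * of_nat ((d - card u) choose (n - card u)))
         * proj d u f x)"
proof
  fix x
  let ?U = "{u. u \<subseteq> {1..d} \<and> card u \<le> ds}"
  have fU: "finite ?U" by (rule finite_subset[of _ "Pow {1..d}"]) auto
  have "trunc_anova d ds f x = (\<Sum>u\<in>?U. gmob d f u x)"
    unfolding trunc_anova_def by (intro sum.cong refl anova_mob) auto
  also have "\<dots> = (\<Sum>u\<in>?U. \<Sum>v\<in>{v. v \<in> ?U \<and> v \<subseteq> u}. (-1::complex) ^ (card u - card v) * proj d v f x)"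
  proof (rule sum.cong[OF refl])
    fix u assume u: "u \<in> ?U"
    have fu: "finite u" using u finite_subset by blast
    have "Pow u = {v. v \<in> ?U \<and> v \<subseteq> u}"
      using u fu by (auto dest: card_mono)
    then show "gmob d f u x = (\<Sum>v\<in>{v. v \<in> ?U \<and> v \<subseteq> u}. (-1::complex) ^ (card u - card v) * proj d v f x)"
      unfolding gmob_def by simp
  qed
  also have "\<dots> = (\<Sum>v\<in>?U. \<Sum>u\<in>{u. u \<in> ?U \<and> v \<subseteq> u}. (-1::complex) ^ (card u - card v) * proj d v f x)"
    using fU by (rule sum.swap_restrict[OF _ fU])
  also have "\<dots> = (\<Sum>v\<in>?U. (\<Sum>n = card v..ds. (-1::complex) ^ (n - card v) * of_nat ((d - card v) choose (n - card v))) * proj d v f x)"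
  proof (rule sum.cong[OF refl])
    fix v assume v: "v \<in> ?U"
    show "(\<Sum>u\<in>{u. u \<in> ?U \<and> v \<subseteq> u}. (-1::complex) ^ (card u - card v) * proj d v f x) = (\<Sum>n = card v..ds. (-1::complex) ^ (n - card v) * of_nat ((d - card v) choose (n - card v))) * proj d v f x"
      using coeff[of v d ds] v by (simp add: sum_distrib_right[symmetric])
  qed
  finally show "trunc_anova d ds f x = (\<Sum>u\<in>?U. (\<Sum>n = card u..ds. (-1::complex) ^ (n - card u) * of_nat ((d - card u) choose (n - card u))) * proj d u f x)" .
qed

end
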